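(* Let $a, b, n$ be positive integers with $b>1$, $n>1$ and $\gcd(r_b(n),a)=1$, and write $S = S_a(b,n)$. Then the set of maximal elements of $\operatorname{Ap}(S)$ with respect to the partial order $\preceq_S$ is exactly \[\Big\{ a_i + (b-1)\sum_{j=i}^n a_j \;\Big|\; i = 2,\ldots,n\Big\}.\]
   Context: For $\ell \ge 1$, $r_b(\ell) = \sum_{j=0}^{\ell-1} b^j$, and $r_b(0)=0$. For $i \ge 1$, $a_i := r_b(n) + a\, r_b(i-1)$; $S_a(b,n)$ is the numerical semigroup generated by $\{a_i\}$, with multiplicity $a_1$. $\operatorname{Ap}(S) = \{\omega\in S : \omega - a_1 \notin S\}$. For a numerical semigroup $S$, $\preceq_S$ is the partial order on $\mathbb{Z}$ given by $y \preceq_S x$ iff $x - y \in S$. *)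

theory Defs
  imports Main
begin

definition repunit :: "int \<Rightarrow> nat \<Rightarrow> int" where
  "repunit b l = (\<Sum>j<l. b ^ j)"

text \<open>Generators a_i = r_b(n) + a r_b(i-1), meaningful for i >= 1.\<close>
definition gen :: "int \<Rightarrow> int \<Rightarrow> nat \<Rightarrow> nat \<Rightarrow> int" where
  "gen a b n i = repunit b n + a * repunit b (i - 1)"

inductive_set Sgp :: "int \<Rightarrow> int \<Rightarrow> nat \<Rightarrow> int set" for a b n where
  zero: "0 \<in> Sgp a b n"
| step: "x \<in> Sgp a b n \<Longrightarrow> i \<ge> 1 \<Longrightarrow> x + gen a b n i \<in> Sgp a b n"

definition Apery :: "int set \<Rightarrow> int \<Rightarrow> int set" where
  "Apery S m = {w \<in> S. w - m \<notin> S}"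

definition preceq_S :: "int set \<Rightarrow> int \<Rightarrow> int \<Rightarrow> bool" where
  "preceq_S S y x \<longleftrightarrow> x - y \<in> S"

definition maximals :: "int set \<Rightarrow> int set \<Rightarrow> int set" where
  "maximals S A = {x \<in> A. \<forall>y \<in> A. preceq_S S x y \<longrightarrow> y = x}"

end

theory Submission
  imports Defs
begin


function ds :: "nat \<Rightarrow> nat \<Rightarrow> nat" where
  "ds B x = (if x = 0 \<or> B < 2 then x else x mod B + ds B (x div B))"
  by auto
termination by (relation "measure (\<lambda>(B,x). x)") auto

declare ds.simps[simp del]

lemma ds0[simp]: "ds B 0 = 0" by (subst ds.simps) simp

lemma ds_step: "B \<ge> 2 \<Longrightarrow> d < B \<Longrightarrow> ds B (B*q + d) = d + ds B q"
proof (cases "B*q + d = 0")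
  case True
  assume "B \<ge> 2" "d < B"
  then show ?thesis using True by simp
next
  case False
  assume B: "B \<ge> 2" "d < B"
  then have "(B*q+d) mod B = d" "(B*q+d) div B = q" by auto
  then show ?thesis using False B by (subst ds.simps) simp
qed

lemma ds_Suc: "B \<ge> 2 \<Longrightarrow> ds B (z+1) \<le> ds B z + 1"
proof (induction z rule: less_induct)
  case (less z)
  define q d where "q = z div B" and "d = z mod B"
  have z: "z = B*q + d" and dB: "d < B" using less.prems by (auto simp: q_def d_def)
  show ?case
  proof (cases "d + 1 < B")
    case True
    have "ds B (z+1) = ds B (B*q + (d+1))" using z by simp
    also have "\<dots> = d + 1 + ds B q" using ds_step[OF less.prems True] by simp
    finally show ?thesis using ds_step[OF less.prems dB] z by simp
  next
    case False
    then have d: "d = B - 1" using dB by simp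
    then have z1: "z + 1 = B*(q+1) + 0" using z less.prems by simp
    have "z > 0" using d less.prems z by simp
    then have "q < z" unfolding q_def using less.prems by simp
    then have "ds B (q+1) \<le> ds B q + 1" using less by simp
    moreover have "ds B (z+1) = ds B (q+1)" using z1 ds_step[OF less.prems, of 0 "q+1"] less.prems by simp
    moreover have "ds B z = d + ds B q" using ds_step[OF less.prems dB] z by simp
    ultimately show ?thesis using d less.prems by simp
  qed
qed

lemma ds_add: "B \<ge> 2 \<Longrightarrow> ds B (x + y) \<le> ds B x + ds B y"
proof (induction y arbitrary: x rule: less_induct)
  case (less y)
  note B = less.prems
  show ?case
  proof (cases "y = 0")
    case True then show ?thesis by simp
  next
    case False
    define q d q' d' where "q = y div B" and "d = y mod B" and "q' = x div B" and "d' = x mod B"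
    have y: "y = B*q + d" and x: "x = B*q' + d'" and dB: "d < B" "d' < B"
      using B by (auto simp: q_def d_def q'_def d'_def)
    have qy: "q < y" using False B by (simp add: q_def)
    have IH: "ds B (q' + q) \<le> ds B q' + ds B q" using less.IH[OF qy B] .
    have dsx: "ds B x = d' + ds B q'" using ds_step[OF B dB(2)] x by simp
    have dsy: "ds B y = d + ds B q" using ds_step[OF B dB(1)] y by simp
    show ?thesis
    proof (cases "d' + d < B")
      case True
      have "x + y = B*(q'+q) + (d'+d)" using x y by (simp add: algebra_simps)
      then have "ds B (x+y) = d' + d + ds B (q'+q)" using ds_step[OF B True] by simp
      then show ?thesis using IH dsx dsy by simp
    next
      case False
      have e: "x + y = B*(q'+q+1) + (d'+d-B)" using x y False by (simp add: algebra_simps)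
      have "d'+d-B < B" using dB by simp
      then have "ds B (B*(q'+q+1) + (d'+d-B)) = d'+d-B + ds B (q'+q+1)" by (rule ds_step[OF B])
      then have "ds B (x+y) = d'+d-B + ds B (q'+q+1)" using e by metis
      moreover have "ds B (q'+q+1) \<le> ds B (q'+q) + 1" using ds_Suc[OF B] .
      ultimately show ?thesis using IH dsx dsy False B by simp
    qed
  qed
qed

lemma ds_pow: "B \<ge> 2 \<Longrightarrow> ds B (B^e) = 1"
proof (induction e)
  case 0
  then show ?case using ds_step[of B 1 0] by simp
next
  case (Suc e)
  then show ?case using ds_step[of B 0 "B^e"] by simp
qed

lemma ds_le: "B \<ge> 2 \<Longrightarrow> ds B m \<le> m"
proof (induction m)
  case (Suc m) then show ?case using ds_Suc[of B m] by simp
qed simp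

lemma ds_add_le: "B \<ge> 2 \<Longrightarrow> ds B (x + m) \<le> ds B x + m"
  using ds_add[of B x m] ds_le[of B m] by simp

lemma ds_block: "B \<ge> 2 \<Longrightarrow> u < B^n \<Longrightarrow> ds B (B^n * q + u) = ds B q + ds B u"
proof (induction n arbitrary: q u)
  case 0 then show ?case by simp
next
  case (Suc n)
  define u' d where "u' = u div B" and "d = u mod B"
  have u: "u = B*u' + d" and dB: "d < B" using Suc.prems by (auto simp: u'_def d_def)
  have u'lt: "u' < B^n" unfolding u'_def using Suc.prems(2) by (simp add: less_mult_imp_div_less mult.commute)
  have "B^(Suc n) * q + u = B*(B^n*q + u') + d" using u by (simp add: algebra_simps)
  then have "ds B (B^(Suc n) * q + u) = d + ds B (B^n*q + u')" using ds_step[OF Suc.prems(1) dB] by simp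
  also have "\<dots> = d + ds B q + ds B u'" using Suc.IH[OF Suc.prems(1) u'lt] by simp
  finally show ?case using ds_step[OF Suc.prems(1) dB, of u'] u by simp
qed

lemma ds_full: "B \<ge> 2 \<Longrightarrow> ds B (B^n - 1) = (B-1)*n"
proof (induction n)
  case 0 then show ?case by simp
next
  case (Suc n)
  have pos: "B^n \<ge> 1" using Suc.prems by simp
  have "B^(Suc n) - 1 = B*(B^n - 1) + (B - 1)" using pos Suc.prems
    by (simp add: algebra_simps diff_mult_distrib2)
  then have "ds B (B^(Suc n) - 1) = (B-1) + ds B (B^n - 1)" using ds_step[OF Suc.prems, of "B-1"] Suc.prems by simp
  then show ?case using Suc by (simp add: algebra_simps)
qed

lemma ds_key_aux: "B \<ge> 2 \<Longrightarrow> n \<ge> 1 \<Longrightarrow> y > 0 \<Longrightarrow> (B^n - 1) dvd y \<Longrightarrow> (B-1)*n \<le> ds B y"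
proof (induction y rule: less_induct)
  case (less y)
  note B = less.prems(1) and n = less.prems(2)
  have "B^1 \<le> B^n" using n B by (intro power_increasing) auto
  then have Bn: "B^n \<ge> 2" using B by simp
  show ?case
  proof (cases "y < B^n")
    case True
    then have "y \<le> B^n - 1" by simp
    moreover have "B^n - 1 \<le> y" using less.prems(3,4) by (simp add: dvd_imp_le)
    ultimately have "y = B^n - 1" by simp
    then show ?thesis using ds_full[OF B] by simp
  next
    case False
    define q u where "q = y div B^n" and "u = y mod B^n"
    have y: "y = B^n * q + u" by (simp add: q_def u_def)
    have ul: "u < B^n" unfolding u_def using Bn B by (intro mod_less_divisor) simp
    have "0 < y div B^n" using False Bn div_greater_zero_iff[of y "B^n"] by linarith
    then have q1: "q \<ge> 1" unfolding q_def by simp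
    have "ds B y = ds B q + ds B u" using ds_block[OF B ul] y by simp
    also have "\<dots> \<ge> ds B (q + u)" using ds_add[OF B] by simp
    finally have le: "ds B (q+u) \<le> ds B y" .
    have "q*1 < q * B^n" using q1 Bn by (intro mult_strict_left_mono) auto
    then have ylt: "q + u < y" using y by (simp add: mult.commute)
    have "(B^n - 1)*q + q = B^n * q" using Bn by (simp add: diff_mult_distrib)
    then have eq: "y = (B^n - 1)*q + (q + u)" using y by simp
    have "(B^n - 1) dvd ((B^n - 1)*q + (q + u))" using less.prems(4) eq by simp
    then have "(B^n - 1) dvd (q + u)" using dvd_add_right_iff[of "B^n-1" "(B^n-1)*q" "q+u"] by simp
    then have "(B-1)*n \<le> ds B (q+u)" using less.IH[OF ylt B n] q1 by simp
    then show ?thesis using le by simp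
  qed
qed

lemma ds_key: "B \<ge> 2 \<Longrightarrow> m \<ge> 1 \<Longrightarrow> (B-1)*n \<le> ds B (m*(B^n - 1))"
proof (cases "n = 0")
  case False
  assume "B \<ge> 2" "m \<ge> 1"
  moreover have "B^n - 1 > 0" using \<open>B \<ge> 2\<close> False
    using one_less_power[of B n] by simp
  ultimately show ?thesis using ds_key_aux[of B n "m*(B^n-1)"] False by simp
qed simp

lemma keyc: "B \<ge> 2 \<Longrightarrow> ds B P \<le> N \<Longrightarrow> P + K = m*(B^n - 1) \<Longrightarrow> m \<ge> 1 \<Longrightarrow> N + K < (B-1)*n \<Longrightarrow> False"
  using ds_key[of B m n] ds_add_le[of B P K] by simp



lemma R_Suc: "repunit b (Suc l) = b * repunit b l + 1"
  unfolding repunit_def sum.lessThan_Suc_shift by (simp add: sum_distrib_left)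

lemma R_0[simp]: "repunit b 0 = 0" unfolding repunit_def by simp

lemma R_geom: "(b - 1) * repunit b l = b^l - 1"
  by (induction l) (simp_all add: R_Suc algebra_simps)

lemma R_add: "repunit b (l + m) = repunit b l + b^l * repunit b m"
  by (induction l) (simp_all add: R_Suc algebra_simps)

lemma R_nonneg: "b \<ge> 0 \<Longrightarrow> repunit b l \<ge> 0"
  unfolding repunit_def by (simp add: sum_nonneg)

lemma R_ge: "b \<ge> 1 \<Longrightarrow> repunit b l \<ge> int l"
proof (induction l)
  case (Suc l)
  then have "b * repunit b l \<ge> repunit b l" using R_nonneg[of b l]
    by (simp add: mult_right_mono[of 1 b "repunit b l", simplified])
  then show ?case using Suc by (simp add: R_Suc)
qed simp

definition rn :: "nat \<Rightarrow> nat \<Rightarrow> nat" where "rn B l = (\<Sum>j<l. B^j)"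

lemma R_nat: "b \<ge> 0 \<Longrightarrow> repunit b l = int (rn (nat b) l)"
  unfolding repunit_def rn_def by simp

lemma rn_geom: "B \<ge> 1 \<Longrightarrow> (B - 1) * rn B l + 1 = B^l"
proof -
  assume B: "B \<ge> 1"
  have "int ((B - 1) * rn B l + 1) = (int B - 1) * repunit (int B) l + 1"
    using B R_nat[of "int B" l] by (simp add: of_nat_diff)
  also have "\<dots> = int B ^ l" using R_geom[of "int B" l] by simp
  finally show ?thesis by (metis of_nat_eq_iff of_nat_power)
qed

context
  fixes a b :: int and n :: nat
begin

lemma S_add: "y \<in> Sgp a b n \<Longrightarrow> x \<in> Sgp a b n \<Longrightarrow> x + y \<in> Sgp a b n"
proof (induction y rule: Sgp.induct)
  case zero then show ?case by simp
next
  case (step y i)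
  then show ?case using Sgp.step[of "x+y" a b n i] by (simp add: add.assoc)
qed

lemma S_mult: "j \<ge> 1 \<Longrightarrow> int m * gen a b n j \<in> Sgp a b n"
proof (induction m)
  case 0 then show ?case by (simp add: Sgp.zero)
next
  case (Suc m)
  then show ?case using Sgp.step[of "int m * gen a b n j" a b n j] by (simp add: algebra_simps)
qed

lemma S_sum: "finite F \<Longrightarrow> (\<forall>j\<in>F. j \<ge> 1) \<Longrightarrow> (\<Sum>j\<in>F. int (c j) * gen a b n j) \<in> Sgp a b n"
proof (induction F rule: finite_induct)
  case empty then show ?case by (simp add: Sgp.zero)
next
  case (insert j F)
  then show ?case using S_add S_mult by simp
qed

lemma S_rep: "x \<in> Sgp a b n \<Longrightarrow> \<exists>c K. (\<forall>j. c j \<noteq> 0 \<longrightarrow> 1 \<le> j \<and> j \<le> K) \<and> x = (\<Sum>j=1..K. int (c j) * gen a b n j)"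
proof (induction x rule: Sgp.induct)
  case zero
  show ?case by (rule exI[of _ "\<lambda>_. 0"], rule exI[of _ 0]) simp
next
  case (step x i)
  then obtain c K where c: "\<forall>j. c j \<noteq> 0 \<longrightarrow> 1 \<le> j \<and> j \<le> K" and x: "x = (\<Sum>j=1..K. int (c j) * gen a b n j)" by blast
  define K' where "K' = max K i"
  define c' where "c' = c(i := Suc (c i))"
  have s1: "(\<Sum>j=1..K. int (c j) * gen a b n j) = (\<Sum>j=1..K'. int (c j) * gen a b n j)"
    using c by (intro sum.mono_neutral_left) (auto simp: K'_def)
  have "(\<Sum>j=1..K'. int (c' j) * gen a b n j) = (\<Sum>j=1..K'. int (c j) * gen a b n j + (if j = i then gen a b n j else 0))"
    by (intro sum.cong) (auto simp: c'_def algebra_simps)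
  also have "\<dots> = (\<Sum>j=1..K'. int (c j) * gen a b n j) + gen a b n i"
    using step.hyps(2) by (simp add: sum.distrib K'_def)
  finally have "x + gen a b n i = (\<Sum>j=1..K'. int (c' j) * gen a b n j)" using x s1 by simp
  moreover have "\<forall>j. c' j \<noteq> 0 \<longrightarrow> 1 \<le> j \<and> j \<le> K'" using c step.hyps(2) unfolding c'_def K'_def by (auto simp: le_max_iff_disj)
  ultimately show ?case by blast
qed

lemma S_inv:
  assumes b: "b > 1" and x: "x \<in> Sgp a b n"
  shows "\<exists>N T::nat. x = int N * repunit b n + a * int T \<and> ds (nat b) (N + (nat b - 1) * T) \<le> N"
  using x
proof (induction x rule: Sgp.induct)
  case zero
  show ?case by (rule exI[of _ 0], rule exI[of _ 0]) simp
next
  case (step x i)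
  then obtain N T where x: "x = int N * repunit b n + a * int T" and d: "ds (nat b) (N + (nat b - 1) * T) \<le> N" by blast
  define B where "B = nat b"
  have B2: "B \<ge> 2" using b by (simp add: B_def)
  define T' where "T' = T + rn B (i - 1)"
  have g: "gen a b n i = repunit b n + a * int (rn B (i-1))"
    unfolding gen_def B_def using R_nat[of b "i-1"] b by simp
  have e1: "x + gen a b n i = int (Suc N) * repunit b n + a * int T'"
    using x g by (simp add: T'_def algebra_simps)
  have "Suc N + (B - 1) * T' = (N + (B - 1) * T) + ((B - 1) * rn B (i-1) + 1)"
    by (simp add: T'_def algebra_simps)
  also have "\<dots> = (N + (B - 1) * T) + B^(i-1)" using rn_geom[of B "i-1"] B2 by simp
  finally have e2: "Suc N + (B - 1) * T' = (N + (B - 1) * T) + B^(i-1)" .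
  have "ds B (Suc N + (B - 1) * T') \<le> ds B (N + (B - 1) * T) + ds B (B^(i-1))"
    unfolding e2 by (rule ds_add[OF B2])
  then have "ds B (Suc N + (B - 1) * T') \<le> Suc N" using d ds_pow[OF B2] by (simp add: B_def)
  then show ?case using e1 unfolding B_def by blast
qed

end


context
  fixes a b :: int and n :: nat
  assumes apos: "a > 0" and b1: "b > 1" and n1: "n > 1"
    and cop: "gcd (repunit b n) a = 1"
begin

abbreviation "g \<equiv> gen a b n"
abbreviation "r \<equiv> repunit b n"
abbreviation "S \<equiv> Sgp a b n"
definition W :: "nat \<Rightarrow> int" where "W i = g i + (b - 1) * (\<Sum>j = i..n. g j)"

lemma g1: "g 1 = r" unfolding gen_def by simp

lemma r_pos: "r \<ge> int n" using R_ge[of b n] b1 by simp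

lemma Rsum: "i + c = n + 1 \<Longrightarrow> i \<ge> 1 \<Longrightarrow>
  (b - 1) * (\<Sum>j=i..n. g j) = (b-1) * int c * r + a * (r - repunit b (i-1) - int c)"
proof (induction c arbitrary: i)
  case 0
  then have "i = n + 1" by simp
  then show ?case by simp
next
  case (Suc c)
  then have iin: "i \<le> n" by simp
  have IH: "(b - 1) * (\<Sum>j=Suc i..n. g j) = (b-1) * int c * r + a * (r - repunit b i - int c)"
    using Suc.IH[of "Suc i"] Suc.prems by simp
  have s: "(\<Sum>j=i..n. g j) = g i + (\<Sum>j=Suc i..n. g j)" using iin by (rule sum.atLeast_Suc_atMost)
  have gi: "(b-1) * g i = (b-1) * r + a * (b^(i-1) - 1)"
  proof -
    have "a * ((b-1) * repunit b (i-1)) = a * (b^(i-1) - 1)" using R_geom[of b "i-1"] by simp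
    then show ?thesis unfolding gen_def by (simp add: algebra_simps)
  qed
  have Ri: "repunit b i = repunit b (i-1) + b^(i-1)"
    using R_Suc[of b "i-1"] R_geom[of b "i-1"] Suc.prems(2) by (simp add: algebra_simps)
  have Ri2: "a * repunit b i = a * repunit b (i-1) + a * b^(i-1)" unfolding Ri by (simp add: distrib_left)
  show ?case unfolding s distrib_left gi IH by (simp add: algebra_simps Ri2)
qed

lemma W_closed: "2 \<le> i \<Longrightarrow> i \<le> n \<Longrightarrow> W i = (1 + (b-1) * int (n+1-i)) * r + a * (r - int (n+1-i))"
proof -
  assume i: "2 \<le> i" "i \<le> n"
  have "(b - 1) * (\<Sum>j=i..n. g j) = (b-1) * int (n+1-i) * r + a * (r - repunit b (i-1) - int (n+1-i))"
    using Rsum[of i "n+1-i"] i by simp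
  then show ?thesis unfolding W_def gen_def by (simp add: algebra_simps)
qed

lemma S_nonneg: "x \<in> S \<Longrightarrow> x \<ge> 0"
proof (induction x rule: Sgp.induct)
  case (step x i)
  have "g i \<ge> 0" unfolding gen_def using R_nonneg[of b] b1 apos by simp
  then show ?case using step by simp
qed simp

lemma W_in: "2 \<le> i \<Longrightarrow> i \<le> n \<Longrightarrow> W i \<in> S"
proof -
  assume i: "2 \<le> i" "i \<le> n"
  have "(b - 1) * (\<Sum>j = i..n. g j) = (\<Sum>j = i..n. int (nat (b-1)) * g j)"
    using b1 by (simp add: sum_distrib_left)
  also have "\<dots> \<in> S" using i by (intro S_sum) auto
  finally show ?thesis unfolding W_def using S_add S_mult[of i 1] i by simp
qed

lemma cop': "coprime a r" using cop by (simp add: coprime_iff_gcd_eq_1 gcd.commute)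

lemma W_notin: "2 \<le> i \<Longrightarrow> i \<le> n \<Longrightarrow> W i - g 1 \<notin> S"
proof
  assume i: "2 \<le> i" "i \<le> n" and mem: "W i - g 1 \<in> S"
  obtain N T :: nat where NT: "W i - g 1 = int N * r + a * int T"
    and d: "ds (nat b) (N + (nat b - 1) * T) \<le> N" using S_inv[OF b1 mem] by blast
  define B where "B = nat b"
  define A where "A = nat a"
  define c where "c = n + 1 - i"
  have B2: "B \<ge> 2" using b1 by (simp add: B_def)
  have c1: "c \<ge> 1" "c \<le> n - 1" using i by (auto simp: c_def)
  define M where "M = (B - 1) * c"
  have Mi: "int M = (b - 1) * int c" using b1 by (simp add: M_def B_def of_nat_diff)
  have "W i - g 1 = (b-1) * int c * r + a * (r - int c)" using W_closed[OF i] g1 by (simp add: c_def algebra_simps)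
  then have eq: "int M * r + a * (r - int c) = int N * r + a * int T"
    using NT Mi by simp
  then have eq2: "(int M - int N) * r = a * (int T - r + int c)" by (simp add: algebra_simps)
  then have "a dvd (int M - int N) * r" by simp
  then have "a dvd (int M - int N)" using cop' by (simp add: coprime_dvd_mult_left_iff)
  then obtain k where k: "int M - int N = a * k" by blast
  have "a * (k * r) = a * (int T - r + int c)" using eq2 k by (simp add: algebra_simps)
  then have "k * r = int T - r + int c" using apos by simp
  then have Tk: "int T = (k + 1) * r - int c" by (simp add: algebra_simps)
  have rpos: "r > 0" using r_pos n1 by simp
  have k0: "k \<ge> 0"
  proof (rule ccontr)
    assume "\<not> k \<ge> 0"
    then have "(k+1) * r \<le> 0" using rpos by (simp add: mult_nonpos_nonneg)
    then show False using Tk c1 by simp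
  qed
  define K where "K = nat k"
  have geo: "(b - 1) * r = b^n - 1" by (rule R_geom)
  have Bn: "int (B^n - 1) = b^n - 1" using b1 by (simp add: B_def of_nat_diff)
  have "int (N + (B - 1) * T + A * K) = int N + (b-1) * int T + a * k"
    using b1 apos k0 by (simp add: B_def A_def K_def of_nat_diff)
  also have "\<dots> = int M + (b-1) * int T" using k by simp
  also have "\<dots> = (b-1) * int c + (b-1) * ((k + 1) * r - int c)" using Mi Tk by simp
  also have "\<dots> = (k + 1) * ((b - 1) * r)" by (simp add: algebra_simps)
  also have "\<dots> = (k + 1) * (b^n - 1)" by (simp only: geo)
  also have "\<dots> = int (K + 1) * int (B^n - 1)" using Bn k0 by (simp add: K_def)
  also have "\<dots> = int ((K + 1) * (B^n - 1))" by (simp only: of_nat_mult)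
  finally have e: "N + (B - 1) * T + A * K = (K + 1) * (B^n - 1)" by (simp only: of_nat_eq_iff)
  have "int (N + A * K) = int M" using k apos k0 by (simp add: A_def K_def)
  then have "N + A * K = (B - 1) * c" unfolding M_def by (simp only: of_nat_eq_iff)
  also have "\<dots> < (B - 1) * n" using c1 B2 n1 by simp
  finally have lt: "N + A * K < (B - 1) * n" .
  show False using keyc[OF B2 d[folded B_def] e _ lt] by simp
qed


lemma W_incomp: "2 \<le> i \<Longrightarrow> i \<le> n \<Longrightarrow> 2 \<le> j \<Longrightarrow> j \<le> n \<Longrightarrow> i \<noteq> j \<Longrightarrow> W j - W i \<notin> S"
proof
  assume i: "2 \<le> i" "i \<le> n" and j: "2 \<le> j" "j \<le> n" and ij: "i \<noteq> j" and mem: "W j - W i \<in> S"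
  obtain N T :: nat where NT: "W j - W i = int N * r + a * int T"
    and d: "ds (nat b) (N + (nat b - 1) * T) \<le> N" using S_inv[OF b1 mem] by blast
  define B where "B = nat b"
  define A where "A = nat a"
  define \<delta> where "\<delta> = int i - int j"
  have B2: "B \<ge> 2" using b1 by (simp add: B_def)
  have dn: "\<delta> \<le> int n - 2" "\<delta> \<ge> 2 - int n" "\<delta> \<noteq> 0" using i j ij by (auto simp: \<delta>_def)
  have "W j - W i = (b-1) * \<delta> * r - a * \<delta>" using W_closed[OF i] W_closed[OF j] i j
    by (simp add: \<delta>_def of_nat_diff algebra_simps)
  then have eq2: "((b-1) * \<delta> - int N) * r = a * (int T + \<delta>)" using NT by (simp add: algebra_simps)
  then have "a dvd ((b-1) * \<delta> - int N) * r" by simp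
  then have "a dvd ((b-1) * \<delta> - int N)" using cop' by (simp add: coprime_dvd_mult_left_iff)
  then obtain k where k: "(b-1) * \<delta> - int N = a * k" by blast
  have "a * (k * r) = ((b-1) * \<delta> - int N) * r" using k by simp
  then have "a * (k * r) = a * (int T + \<delta>)" using eq2 by simp
  then have Tk: "int T = k * r - \<delta>" using apos by simp
  have rpos: "r \<ge> int n" using r_pos .
  have k1: "k \<ge> 1"
  proof (rule ccontr)
    assume "\<not> k \<ge> 1"
    then consider "k = 0" | "k \<le> -1" by linarith
    then show False
    proof cases
      case 1
      have "int T = - \<delta>" using Tk 1 by simp
      then have "\<delta> \<le> 0" by simp
      have "(b-1) * \<delta> \<ge> 0" using k 1 by simp
      then have "\<delta> \<ge> 0" using b1 by (simp add: zero_le_mult_iff)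
      then show False using \<open>\<delta> \<le> 0\<close> dn by simp
    next
      case 2
      then have "k * r \<le> - r" using rpos n1 by (simp add: mult_right_mono[of k "-1" r, simplified])
      then show False using Tk dn rpos by simp
    qed
  qed
  define K where "K = nat k"
  have geo: "(b - 1) * r = b^n - 1" by (rule R_geom)
  have Bn: "int (B^n - 1) = b^n - 1" using b1 by (simp add: B_def of_nat_diff)
  have "int (N + (B - 1) * T + A * K) = int N + (b-1) * int T + a * k"
    using b1 apos k1 by (simp add: B_def A_def K_def of_nat_diff)
  also have "\<dots> = (b-1) * \<delta> + (b-1) * int T" using k by simp
  also have "\<dots> = (b-1) * \<delta> + (b-1) * (k * r - \<delta>)" using Tk by simp
  also have "\<dots> = k * ((b - 1) * r)" by (simp add: algebra_simps)
  also have "\<dots> = k * (b^n - 1)" by (simp only: geo)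
  also have "\<dots> = int K * int (B^n - 1)" using Bn k1 by (simp add: K_def)
  also have "\<dots> = int (K * (B^n - 1))" by (simp only: of_nat_mult)
  finally have e: "N + (B - 1) * T + A * K = K * (B^n - 1)" by (simp only: of_nat_eq_iff)
  have "int (N + A * K) = (b-1) * \<delta>" using k apos k1 by (simp add: A_def K_def)
  also have "\<dots> \<le> (b-1) * (int n - 2)" using dn b1 by (intro mult_left_mono) auto
  also have "\<dots> < (b-1) * int n" using b1 by simp
  also have "\<dots> = int ((B - 1) * n)" using b1 by (simp add: B_def of_nat_diff)
  finally have lt: "N + A * K < (B - 1) * n" by (simp only: of_nat_less_iff)
  have "K \<ge> 1" using k1 by (simp add: K_def)
  then show False using keyc[OF B2 d[folded B_def] e _ lt] by blast
qed

lemma gen_big: "j \<ge> n + 1 \<Longrightarrow> g j - g 1 \<in> S"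
proof -
  assume j: "j \<ge> n + 1"
  define m where "m = j - 1 - n"
  have jm: "j - 1 = n + m" using j by (simp add: m_def)
  define Kc where "Kc = a - 1 + a * (b - 1) * repunit b m"
  have Kc0: "Kc \<ge> 0" unfolding Kc_def using apos b1 R_nonneg[of b m] by simp
  have geo: "(b - 1) * r = b^n - 1" by (rule R_geom)
  have "g j - g 1 = a * repunit b (n + m)" unfolding gen_def using jm by simp
  also have "\<dots> = a * r + a * b^n * repunit b m" using R_add[of b n m] by (simp add: algebra_simps)
  also have "\<dots> = a * r + a * ((b-1) * r + 1) * repunit b m" using geo by simp
  also have "\<dots> = g (m + 1) + Kc * g 1" unfolding Kc_def g1 by (simp add: gen_def algebra_simps)
  also have "\<dots> = g (m + 1) + int (nat Kc) * g 1" using Kc0 by simp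
  finally have e: "g j - g 1 = g (m + 1) + int (nat Kc) * g 1" .
  have "g (m + 1) \<in> S" using S_mult[of "m+1" 1] by simp
  moreover have "int (nat Kc) * g 1 \<in> S" by (rule S_mult) simp
  ultimately show ?thesis unfolding e using S_add by blast
qed

lemma Ap_support:
  assumes x: "x - g 1 \<notin> S"
    and c: "\<forall>j. c j \<noteq> 0 \<longrightarrow> 1 \<le> j \<and> j \<le> K" and xs: "x = (\<Sum>j=1..K. int (c j) * g j)"
  shows "\<forall>j. c j \<noteq> 0 \<longrightarrow> 2 \<le> j \<and> j \<le> n"
proof (rule ccontr)
  assume "\<not> ?thesis"
  then obtain j0 where j0: "c j0 \<noteq> 0" and bad: "\<not> (2 \<le> j0 \<and> j0 \<le> n)" by blast
  have "1 \<le> j0" using c j0 by blast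
  then have bad: "j0 = 1 \<or> j0 > n" using bad by auto
  have j0K: "1 \<le> j0" "j0 \<le> K" using c j0 by auto
  define c' where "c' = c(j0 := c j0 - 1)"
  have "(\<Sum>j=1..K. int (c j) * g j) = (\<Sum>j=1..K. int (c' j) * g j + (if j = j0 then g j else 0))"
    using j0 by (intro sum.cong) (auto simp: c'_def algebra_simps of_nat_diff)
  also have "\<dots> = (\<Sum>j=1..K. int (c' j) * g j) + g j0" using j0K by (simp add: sum.distrib)
  finally have xe: "x - g 1 = (g j0 - g 1) + (\<Sum>j=1..K. int (c' j) * g j)" using xs by simp
  moreover have "g j0 - g 1 \<in> S" using bad gen_big Sgp.zero by auto
  moreover have "(\<Sum>j=1..K. int (c' j) * g j) \<in> S" by (intro S_sum) auto
  ultimately have "(g j0 - g 1) + (\<Sum>j=1..K. int (c' j) * g j) \<in> S" using S_add by blast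
  then have "x - g 1 \<in> S" unfolding xe .
  then show False using x by contradiction
qed


lemma REL: "i \<ge> 2 \<Longrightarrow> k \<ge> 1 \<Longrightarrow> b * g k + g i = g (k+1) + b * g (i-1)"
proof -
  assume i: "i \<ge> 2" and k: "k \<ge> 1"
  have Rk: "repunit b k = b * repunit b (k-1) + 1" using R_Suc[of b "k-1"] k by simp
  have Ri: "repunit b (i-1) = b * repunit b (i-2) + 1" using R_Suc[of b "i-2"] i
    by (simp add: Suc_diff_Suc numeral_2_eq_2)
  have "i - 1 - 1 = i - 2" by simp
  then show ?thesis unfolding gen_def using Rk Ri by (simp add: algebra_simps)
qed

lemma sum_shift:
  fixes f :: "nat \<Rightarrow> int" and c :: "nat \<Rightarrow> nat" and A :: "nat set"
  assumes "finite A" "k \<in> A" "i \<in> A" "k+1 \<in> A" "i-1 \<in> A"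
  shows "(\<Sum>j\<in>A. (int (c j) - (if j = k then b else 0) - (if j = i then 1 else 0)
            + (if j = k+1 then 1 else 0) + (if j = i-1 then b else 0)) * f j)
       = (\<Sum>j\<in>A. int (c j) * f j) - b * f k - f i + f (k+1) + b * f (i-1)"
proof -
  have "(\<Sum>j\<in>A. (int (c j) - (if j = k then b else 0) - (if j = i then 1 else 0)
            + (if j = k+1 then 1 else 0) + (if j = i-1 then b else 0)) * f j)
      = (\<Sum>j\<in>A. int (c j) * f j - (if j = k then b * f j else 0) - (if j = i then f j else 0)
            + (if j = k+1 then f j else 0) + (if j = i-1 then b * f j else 0))"
    by (intro sum.cong) (auto simp: algebra_simps)
  also have "\<dots> = (\<Sum>j\<in>A. int (c j) * f j) - b * f k - f i + f (k+1) + b * f (i-1)"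
    using assms by (simp add: sum.distrib sum_subtractf)
  finally show ?thesis .
qed

definition Phi :: "(nat \<Rightarrow> nat) \<Rightarrow> nat" where "Phi c = (\<Sum>j=1..n+1. c j * j^2)"

lemma Ap_below:
  assumes xS: "x \<in> S" and x1: "x - g 1 \<notin> S"
  shows "\<exists>i. 2 \<le> i \<and> i \<le> n \<and> W i - x \<in> S"
proof -
  define Rep where "Rep c \<longleftrightarrow> (\<forall>j. c j \<noteq> 0 \<longrightarrow> 2 \<le> j \<and> j \<le> n) \<and> x = (\<Sum>j=1..n+1. int (c j) * g j)" for c
  obtain c K where cK: "\<forall>j. c j \<noteq> 0 \<longrightarrow> 1 \<le> j \<and> j \<le> K" and xc: "x = (\<Sum>j=1..K. int (c j) * g j)"
    using S_rep[OF xS] by blast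
  have supp: "\<forall>j. c j \<noteq> 0 \<longrightarrow> 2 \<le> j \<and> j \<le> n" using Ap_support[OF x1 cK xc] .
  have "(\<Sum>j=1..K. int (c j) * g j) = (\<Sum>j=1..max K (n+1). int (c j) * g j)"
    using cK by (intro sum.mono_neutral_left) auto
  also have "\<dots> = (\<Sum>j=1..n+1. int (c j) * g j)"
    using supp by (intro sum.mono_neutral_right) auto
  finally have "Rep c" using supp xc by (simp add: Rep_def)
  then obtain c where Rc: "Rep c" and cmin: "\<forall>c'. Rep c' \<longrightarrow> Phi c \<le> Phi c'"
    using ex_has_least_nat[of Rep c Phi] by blast
  have supp: "\<forall>j. c j \<noteq> 0 \<longrightarrow> 2 \<le> j \<and> j \<le> n" and xc: "x = (\<Sum>j=1..n+1. int (c j) * g j)"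
    using Rc by (auto simp: Rep_def)
  have NF: False if ik: "2 \<le> i" "i \<le> k" "k \<le> n" and ck: "int (c k) \<ge> b"
    and ci: "if i = k then int (c k) \<ge> b + 1 else c i \<ge> 1" for i k
  proof -
    define d where "d j = int (c j) - (if j = k then b else 0) - (if j = i then 1 else 0)
            + (if j = k+1 then 1 else 0) + (if j = i-1 then b else 0)" for j
    have d0: "d j \<ge> 0" for j
      using ik ck ci b1 by (auto simp: d_def split: if_splits)
    define c' where "c' j = nat (d j)" for j
    have dc': "int (c' j) = d j" for j using d0 by (simp add: c'_def)
    have A: "finite {1..n+1}" "k \<in> {1..n+1}" "i \<in> {1..n+1}" "k+1 \<in> {1..n+1}" "i-1 \<in> {1..n+1}"
      using ik by auto
    have "(\<Sum>j=1..n+1. int (c' j) * g j) = (\<Sum>j=1..n+1. d j * g j)" by (simp add: dc')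
    also have "\<dots> = (\<Sum>j=1..n+1. int (c j) * g j) - b * g k - g i + g (k+1) + b * g (i-1)"
      unfolding d_def by (rule sum_shift[OF A])
    also have "\<dots> = x" using xc REL[of i k] ik by simp
    finally have xc': "x = (\<Sum>j=1..n+1. int (c' j) * g j)" by simp
    have supp': "\<forall>j. c' j \<noteq> 0 \<longrightarrow> 1 \<le> j \<and> j \<le> n+1"
    proof (intro allI impI)
      fix j assume "c' j \<noteq> 0"
      then have "d j \<noteq> 0" by (simp add: c'_def)
      then have "c j \<noteq> 0 \<or> j = k \<or> j = i \<or> j = k+1 \<or> j = i-1" by (auto simp: d_def split: if_splits)
      moreover have "c j \<noteq> 0 \<longrightarrow> 2 \<le> j \<and> j \<le> n" using supp by blast
      ultimately show "1 \<le> j \<and> j \<le> n+1" using ik by auto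
    qed
    have supp2: "\<forall>j. c' j \<noteq> 0 \<longrightarrow> 2 \<le> j \<and> j \<le> n" using Ap_support[OF x1 supp' xc'] .
    then have "Rep c'" using xc' by (simp add: Rep_def)
    then have le: "Phi c \<le> Phi c'" using cmin by blast
    have "int (Phi c') = (\<Sum>j=1..n+1. d j * int (j^2))" by (simp add: Phi_def dc')
    also have "\<dots> = (\<Sum>j=1..n+1. int (c j) * int (j^2)) - b * int (k^2) - int (i^2) + int ((k+1)^2) + b * int ((i-1)^2)"
      unfolding d_def by (rule sum_shift[OF A])
    also have "(\<Sum>j=1..n+1. int (c j) * int (j^2)) = int (Phi c)" by (simp add: Phi_def)
    finally have e: "int (Phi c') = int (Phi c) - (b * int (k^2) + int (i^2) - int ((k+1)^2) - b * int ((i-1)^2))"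
      by simp
    have fac: "b * int (k^2) + int (i^2) - int ((k+1)^2) - b * int ((i-1)^2)
        = (int k - int i + 1) * ((b - 1) * (int k + int i - 1) - 2)"
    proof -
      have h1: "int ((i-1)^2) = (int i - 1)^2" using ik by (simp add: of_nat_diff)
      have h2: "int ((k+1)^2) = (int k + 1)^2" "int (k^2) = (int k)^2" "int (i^2) = (int i)^2" by simp_all
      show ?thesis unfolding h1 h2 by (simp add: power2_eq_square algebra_simps)
    qed
    have "(b - 1) * (int k + int i - 1) \<ge> 1 * 3" using ik b1 by (intro mult_mono) auto
    then have "(int k - int i + 1) * ((b - 1) * (int k + int i - 1) - 2) > 0" using ik by simp
    then show False using e fac le by simp
  qed
  define i0 where "i0 = (if \<exists>j. c j \<noteq> 0 then (LEAST j. c j \<noteq> 0) else 2)"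
  have i0: "2 \<le> i0 \<and> i0 \<le> n \<and> (\<forall>j<i0. c j = 0)"
  proof (cases "\<exists>j. c j \<noteq> 0")
    case True
    then obtain j where "c j \<noteq> 0" by blast
    have "c i0 \<noteq> 0" using LeastI_ex[of "\<lambda>j. c j \<noteq> 0"] True by (simp add: i0_def)
    moreover have "\<forall>j<i0. c j = 0" using True by (auto simp: i0_def dest: not_less_Least)
    ultimately show ?thesis using supp by blast
  next
    case False
    then show ?thesis using n1 by (simp add: i0_def)
  qed
  have ci0: "int (c i0) \<le> b"
  proof (rule ccontr)
    assume "\<not> int (c i0) \<le> b"
    then show False using NF[of i0 i0] i0 by simp
  qed
  have cj: "int (c j) \<le> b - 1" if "i0 < j" for j
  proof (rule ccontr)
    assume a: "\<not> int (c j) \<le> b - 1"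
    then have "c j \<noteq> 0" using b1 by auto
    then have jn: "j \<le> n" using supp by blast
    have "c i0 \<noteq> 0"
    proof
      assume "c i0 = 0"
      then have "\<not> (\<exists>j. c j \<noteq> 0) \<or> c (LEAST j. c j \<noteq> 0) = 0" by (simp add: i0_def split: if_splits)
      then show False using \<open>c j \<noteq> 0\<close> LeastI_ex[of "\<lambda>j. c j \<noteq> 0"] by blast
    qed
    then show False using NF[of i0 j] i0 a that jn by simp
  qed
  define e where "e j = (if j = i0 then nat b - c j else if j \<in> {Suc i0..n} then nat b - 1 - c j else 0)" for j
  have ce: "int (c j) + int (e j) = (if j = i0 then b else if j \<in> {Suc i0..n} then b - 1 else 0)" if jr: "j \<in> {1..n+1}" for j
  proof -
    consider "j < i0" | "j = i0" | "j \<in> {Suc i0..n}" | "j = n + 1"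
      using jr by (cases "j < i0"; cases "j = i0"; cases "j \<le> n"; auto)
    then show ?thesis
    proof cases
      case 1 then show ?thesis using i0 by (simp add: e_def)
    next
      case 2 then show ?thesis using ci0 b1 by (simp add: e_def of_nat_diff)
    next
      case 3 then show ?thesis using cj[of j] b1 i0 by (simp add: e_def of_nat_diff)
    next
      case 4 then show ?thesis using supp i0 by (auto simp: e_def)
    qed
  qed
  have ES: "(\<Sum>j=1..n+1. int (e j) * g j) \<in> S" by (intro S_sum) auto
  have "x + (\<Sum>j=1..n+1. int (e j) * g j) = (\<Sum>j=1..n+1. (int (c j) + int (e j)) * g j)"
    unfolding xc by (simp add: sum.distrib algebra_simps)
  also have "\<dots> = (\<Sum>j=1..n+1. (if j = i0 then b * g j else 0) + (if j \<in> {Suc i0..n} then (b - 1) * g j else 0))"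
    using ce by (intro sum.cong) auto
  also have "\<dots> = b * g i0 + (\<Sum>j\<in>{1..n+1} \<inter> {Suc i0..n}. (b - 1) * g j)"
  proof -
    have "(\<Sum>j=1..n+1. (if j \<in> {Suc i0..n} then (b - 1) * g j else 0)) = (\<Sum>j\<in>{1..n+1} \<inter> {Suc i0..n}. (b - 1) * g j)"
      by (simp only: sum.inter_restrict[OF finite_atLeastAtMost])
    moreover have "(\<Sum>j=1..n+1. (if j = i0 then b * g j else 0)) = b * g i0" using i0 by simp
    ultimately show ?thesis by (simp only: sum.distrib)
  qed
  also have "{1..n+1} \<inter> {Suc i0..n} = {Suc i0..n}" by auto
  also have "b * g i0 + (\<Sum>j\<in>{Suc i0..n}. (b - 1) * g j) = W i0"
    unfolding W_def using i0 by (simp add: sum.atLeast_Suc_atMost sum_distrib_left algebra_simps)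
  finally have "W i0 - x = (\<Sum>j=1..n+1. int (e j) * g j)" by simp
  then show ?thesis using ES i0 by auto
qed


lemma main: "maximals S (Apery S (g 1)) = {W i | i. 2 \<le> i \<and> i \<le> n}"
proof
  show "maximals S (Apery S (g 1)) \<subseteq> {W i | i. 2 \<le> i \<and> i \<le> n}"
  proof
    fix x assume "x \<in> maximals S (Apery S (g 1))"
    then have xA: "x \<in> S" "x - g 1 \<notin> S" and mx: "\<forall>y\<in>Apery S (g 1). preceq_S S x y \<longrightarrow> y = x"
      by (auto simp: maximals_def Apery_def)
    obtain i where i: "2 \<le> i" "i \<le> n" "W i - x \<in> S" using Ap_below[OF xA] by blast
    have "W i \<in> Apery S (g 1)" using W_in[OF i(1,2)] W_notin[OF i(1,2)] by (simp add: Apery_def)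
    then have "W i = x" using mx i(3) by (simp add: preceq_S_def)
    then show "x \<in> {W i | i. 2 \<le> i \<and> i \<le> n}" using i by blast
  qed
next
  show "{W i | i. 2 \<le> i \<and> i \<le> n} \<subseteq> maximals S (Apery S (g 1))"
  proof
    fix x assume "x \<in> {W i | i. 2 \<le> i \<and> i \<le> n}"
    then obtain i where i: "2 \<le> i" "i \<le> n" and x: "x = W i" by blast
    have WA: "W i \<in> Apery S (g 1)" using W_in[OF i] W_notin[OF i] by (simp add: Apery_def)
    have "y = W i" if yA: "y \<in> Apery S (g 1)" and le: "y - W i \<in> S" for y
    proof -
      have yS: "y \<in> S" "y - g 1 \<notin> S" using yA by (auto simp: Apery_def)
      obtain j where j: "2 \<le> j" "j \<le> n" "W j - y \<in> S" using Ap_below[OF yS] by blast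
      have "(y - W i) + (W j - y) \<in> S" using S_add[OF j(3) le] .
      then have "W j - W i \<in> S" by simp
      then have "j = i" using W_incomp[OF i j(1,2)] by blast
      then have "W i - y \<in> S" using j(3) by simp
      then have "W i - y \<ge> 0" by (rule S_nonneg)
      moreover have "y - W i \<ge> 0" using S_nonneg[OF le] .
      ultimately show "y = W i" by simp
    qed
    then show "x \<in> maximals S (Apery S (g 1))" using WA x by (auto simp: maximals_def preceq_S_def)
  qed
qed

end

theorem proposition29:
  fixes a b :: int and n :: nat
  assumes "a > 0" and "b > 1" and "n > 1"
    and "gcd (repunit b n) a = 1"
  shows "maximals (Sgp a b n) (Apery (Sgp a b n) (gen a b n 1)) =
    {gen a b n i + (b - 1) * (\<Sum>j = i..n. gen a b n j) | i. 2 \<le> i \<and> i \<le> n}"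
  using main[OF assms] unfolding W_def[OF assms] .

end
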